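(* Let $q>0$ and $r\ge 0$ be real numbers. For every integer $n\ge 0$, $$B_n^q(r)=\sum_{k=0}^{n}(-1)^k\,\frac{k!}{k+1}\,W(n,k),$$ where $B_n^q(r)$ and $W(n,k)=W_{q,r}(n,k)$ are as defined in the context.
   Context: The Bernoulli polynomials with a $q$ parameter $B_n^q(r)$ are defined by the formal power series identity in $t$ $$\sum_{n=0}^{\infty}B_n^q(r)\frac{t^n}{n!}=\frac{q\,e^{rt}}{1-e^{qt}}\sum_{k=1}^{\infty}\left(\frac{1-e^{qt}}{q}\right)^k\frac{1}{k}.$$ The $r$-Whitney numbers of the second kind $W(n,k)=W_{q,r}(n,k)$, $0\le k\le n$, are defined by the polynomial identity in $x$: $(qx+r)^n=\sum_{k=0}^n q^k\,W(n,k)\,(x)_k$, where $(x)_k=x(x-1)\cdots(x-k+1)$ is the falling factorial (with $(x)_0=1$). Equivalently, $\sum_{n\ge k}W(n,k)\frac{t^n}{n!}=\frac{e^{rt}}{k!}\left(\frac{e^{qt}-1}{q}\right)^k$. *)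

theory Defs
  imports "HOL-Computational_Algebra.Formal_Power_Series"
begin

definition bq_u :: "real \<Rightarrow> real fps" where
  "bq_u q = fps_const (1 / q) * (1 - fps_exp q)"

text \<open>The formal series sum over k from 1 of u^k / k; since u has zero constant
  term, u^k contributes nothing to the coefficient of t^n when k > n, so the
  formal infinite sum is given coefficientwise by a finite sum.\<close>
definition bq_logsum :: "real \<Rightarrow> real fps" where
  "bq_logsum q = Abs_fps (\<lambda>n. \<Sum>k=1..n. fps_nth (bq_u q ^ k) n / real k)"

definition bernoulli_q_gf :: "real \<Rightarrow> real \<Rightarrow> real fps" where
  "bernoulli_q_gf q r = fps_const q * fps_exp r * bq_logsum q / (1 - fps_exp q)"

definition bernoulli_q :: "real \<Rightarrow> nat \<Rightarrow> real \<Rightarrow> real" where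
  "bernoulli_q q n r = fact n * fps_nth (bernoulli_q_gf q r) n"

definition whitney2 :: "real \<Rightarrow> real \<Rightarrow> nat \<Rightarrow> nat \<Rightarrow> real" where
  "whitney2 q r n k = fact n *
     fps_nth (fps_exp r * fps_const (1 / fact k) * (fps_const (1 / q) * (fps_exp q - 1)) ^ k) n"

end

theory Submission
  imports Defs
begin

unbundle fps_syntax

lemma pow_nth_zero:
  fixes f :: "real fps"
  assumes "f $ 0 = 0" "n < k"
  shows "(f ^ k) $ n = 0"
proof (cases "f ^ k = 0")
  case False
  then have f0: "f \<noteq> 0" by (metis assms(2) less_nat_zero_code neq0_conv power_0_left)
  have "subdegree f \<ge> 1"
    using assms(1) f0 by (metis less_one not_le nth_subdegree_nonzero subdegree_eq_0_iff)
  moreover have "subdegree (f ^ k) \<ge> k * subdegree f" using subdegree_power_ge[OF False] .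
  ultimately have "subdegree (f ^ k) \<ge> k"
    by (metis dual_order.trans mult.right_neutral mult_le_mono2)
  then show ?thesis using assms(2) by (intro nth_less_subdegree_zero) linarith
qed (metis fps_zero_nth)

lemma mult_nth_cong:
  fixes f g h :: "real fps"
  assumes "\<And>i. i \<le> n \<Longrightarrow> f $ i = g $ i"
  shows "(h * f) $ n = (h * g) $ n"
  unfolding fps_mult_nth by (rule sum.cong) (auto simp: assms)

theorem mainTheorem1:
  fixes q r :: real and n :: nat
  assumes "q > 0" and "r \<ge> 0"
  shows "bernoulli_q q n r =
    (\<Sum>k=0..n. (-1) ^ k * (fact k / real (k + 1)) * whitney2 q r n k)"
proof -
  define u where "u = bq_u q"
  define v where "v = fps_const (1 / q) * (fps_exp q - 1)"
  define E where "E = (fps_exp r :: real fps)"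
  define AN where "AN N = (\<Sum>j=0..N. fps_const (1 / real (j + 1)) * u ^ j)" for N
  have uv: "u = - v" unfolding u_def v_def bq_u_def by (simp add: algebra_simps)
  have u0: "u $ 0 = 0" unfolding u_def bq_u_def by simp
  have qu: "fps_const q * u = 1 - fps_exp q"
    using assms(1) unfolding u_def bq_u_def
    by (simp add: mult.assoc[symmetric] fps_const_mult[symmetric])
  have ANstab: "(AN N) $ i = (AN i) $ i" if "i \<le> N" for N i
  proof -
    have "(AN N) $ i = (\<Sum>j=0..N. (u ^ j) $ i / real (j + 1))"
      unfolding AN_def fps_sum_nth by simp
    also have "\<dots> = (\<Sum>j=0..i. (u ^ j) $ i / real (j + 1))"
      using that by (intro sum.mono_neutral_right) (auto simp: pow_nth_zero[OF u0])
    also have "\<dots> = (AN i) $ i"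
      unfolding AN_def fps_sum_nth by simp
    finally show ?thesis .
  qed
  define A where "A = Abs_fps (\<lambda>i. (AN i) $ i)"
  have Anth: "A $ i = (AN N) $ i" if "i \<le> N" for i N
    unfolding A_def using ANstab[OF that] by simp
  have ANu: "AN N * u = (\<Sum>k=1..Suc N. fps_const (1 / real k) * u ^ k)" for N
  proof -
    have "AN N * u = (\<Sum>j=0..N. fps_const (1 / real (Suc j)) * u ^ Suc j)"
      unfolding AN_def sum_distrib_right by (simp add: mult.assoc mult.commute)
    also have "\<dots> = (\<Sum>k=1..Suc N. fps_const (1 / real k) * u ^ k)"
      by (subst sum.shift_bounds_cl_Suc_ivl[symmetric]) simp
    finally show ?thesis .
  qed
  have L: "bq_logsum q = u * A"
  proof (rule fps_ext)
    fix m
    have "(u * A) $ m = (u * AN m) $ m"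
      by (rule mult_nth_cong) (simp add: Anth)
    also have "\<dots> = (\<Sum>k=1..Suc m. (u ^ k) $ m / real k)"
      by (simp add: mult.commute[of u] ANu fps_sum_nth)
    also have "\<dots> = (\<Sum>k=1..m. (u ^ k) $ m / real k)"
      using pow_nth_zero[OF u0, of m "Suc m"] by simp
    also have "\<dots> = bq_logsum q $ m"
      unfolding bq_logsum_def u_def by simp
    finally show "bq_logsum q $ m = (u * A) $ m" by simp
  qed
  have ne: "1 - fps_exp q \<noteq> (0 :: real fps)"
  proof
    assume "1 - fps_exp q = (0 :: real fps)"
    then have "(1 - fps_exp q) $ 1 = (0 :: real fps) $ 1" by simp
    then show False using assms(1) by simp
  qed
  have gf: "bernoulli_q_gf q r = E * A"
  proof -
    have "fps_const q * fps_exp r * bq_logsum q = (E * A) * (1 - fps_exp q)"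
      unfolding L E_def qu[symmetric] by (simp add: algebra_simps)
    then show ?thesis unfolding bernoulli_q_gf_def using fps_divide_times_eq[OF ne] by simp
  qed
  have "bernoulli_q q n r = fact n * (E * AN n) $ n"
    unfolding bernoulli_q_def gf by (simp add: mult_nth_cong[of n A "AN n" E] Anth)
  also have "\<dots> = fact n * (\<Sum>j=0..n. (E * u ^ j) $ n / real (j + 1))"
    unfolding AN_def sum_distrib_left fps_sum_nth
  proof (intro arg_cong[where f="\<lambda>x. fact n * x"] sum.cong refl)
    fix j
    have h: "E * (fps_const (1 / real (j + 1)) * u ^ j) = fps_const (1 / real (j + 1)) * (E * u ^ j)"
      by (simp add: algebra_simps)
    then show "(E * (fps_const (1 / real (j + 1)) * u ^ j)) $ n = (E * u ^ j) $ n / real (j + 1)"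
      unfolding h fps_mult_left_const_nth by simp
  qed
  also have "\<dots> = (\<Sum>k=0..n. (-1) ^ k * (fact k / real (k + 1)) * whitney2 q r n k)"
    unfolding sum_distrib_left whitney2_def
  proof (rule sum.cong)
    fix k assume "k \<in> {0..n}"
    have uk: "u ^ k = fps_const ((-1) ^ k) * v ^ k"
    proof -
      have "-v = fps_const (-1) * v" by (simp add: fps_const_neg[symmetric] del: fps_const_neg)
      then have "(-v) ^ k = fps_const ((-1) ^ k) * v ^ k" by (simp only: power_mult_distrib fps_const_power)
      then show ?thesis using uv by simp
    qed
    define w where "w = (E * v ^ k) $ n"
    have h1: "E * u ^ k = fps_const ((-1) ^ k) * (E * v ^ k)"
      unfolding uk by (simp only: ac_simps)
    have e1: "(E * u ^ k) $ n = (-1) ^ k * w"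
      unfolding h1 w_def fps_mult_left_const_nth ..
    have h2: "fps_exp r * fps_const (1 / fact k) * v ^ k = fps_const (1 / fact k) * (E * v ^ k)"
      unfolding E_def by (simp only: ac_simps)
    have e2: "(fps_exp r * fps_const (1 / fact k) * v ^ k) $ n = (1 / fact k) * w"
      unfolding h2 w_def fps_mult_left_const_nth ..
    have fk: "(fact k :: real) \<noteq> 0" by simp
    show "fact n * ((E * u ^ k) $ n / real (k + 1)) =
      (-1) ^ k * (fact k / real (k + 1)) *
      (fact n * (fps_exp r * fps_const (1 / fact k) * (fps_const (1 / q) * (fps_exp q - 1)) ^ k) $ n)"
      unfolding v_def[symmetric] e1 e2 using fk by (simp add: field_simps)
  qed simp
  finally show ?thesis .
qed

end
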